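(* Let $G$ be a finite group such that, for some prime $p$, the center $Z(G)$ is a nontrivial $p$-group and, for every element $x\in G$ of order $p$, the centralizer $C_G(x)$ is not a $p$-group. Then the cyclic graph $\Delta(G)$ is connected and $\mathrm{diam}(\Delta(G))\le 6$.
   Context: For a finite group $G$, the cyclic graph $\Delta(G)$ has vertex set $G^{\#}=G\setminus\{1\}$, and distinct vertices $x,y$ are adjacent if and only if the subgroup $\langle x,y\rangle$ is cyclic. The diameter is the maximum graph distance between two vertices. *)

theory Defs
  imports "HOL-Algebra.Algebra"
begin

definition group_center :: "('a, 'b) monoid_scheme \<Rightarrow> 'a set" where
  "group_center G = {z \<in> carrier G. \<forall>g \<in> carrier G. z \<otimes>\<^bsub>G\<^esub> g = g \<otimes>\<^bsub>G\<^esub> z}"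

definition group_centralizer :: "('a, 'b) monoid_scheme \<Rightarrow> 'a \<Rightarrow> 'a set" where
  "group_centralizer G x = {g \<in> carrier G. g \<otimes>\<^bsub>G\<^esub> x = x \<otimes>\<^bsub>G\<^esub> g}"

definition is_p_group_set :: "nat \<Rightarrow> 'a set \<Rightarrow> bool" where
  "is_p_group_set p H \<longleftrightarrow> finite H \<and> (\<exists>k. card H = p ^ k)"

definition cyc_vertices :: "('a, 'b) monoid_scheme \<Rightarrow> 'a set" where
  "cyc_vertices G = carrier G - {\<one>\<^bsub>G\<^esub>}"

definition cyc_adj :: "('a, 'b) monoid_scheme \<Rightarrow> 'a \<Rightarrow> 'a \<Rightarrow> bool" where
  "cyc_adj G x y \<longleftrightarrow> x \<in> cyc_vertices G \<and> y \<in> cyc_vertices G \<and> x \<noteq> y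
     \<and> cyclic_group (subgroup_generated G {x, y})"

definition cyc_walk :: "('a, 'b) monoid_scheme \<Rightarrow> 'a list \<Rightarrow> bool" where
  "cyc_walk G xs \<longleftrightarrow> xs \<noteq> [] \<and> set xs \<subseteq> cyc_vertices G
     \<and> (\<forall>i. Suc i < length xs \<longrightarrow> cyc_adj G (xs ! i) (xs ! Suc i))"

text \<open>Graph distance at most n: a walk with at most n edges from x to y.\<close>
definition cyc_dist_le :: "('a, 'b) monoid_scheme \<Rightarrow> nat \<Rightarrow> 'a \<Rightarrow> 'a \<Rightarrow> bool" where
  "cyc_dist_le G n x y \<longleftrightarrow>
     (\<exists>xs. cyc_walk G xs \<and> hd xs = x \<and> last xs = y \<and> length xs \<le> Suc n)"

definition cyc_connected :: "('a, 'b) monoid_scheme \<Rightarrow> bool" where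
  "cyc_connected G \<longleftrightarrow> (\<forall>x \<in> cyc_vertices G. \<forall>y \<in> cyc_vertices G. \<exists>n. cyc_dist_le G n x y)"

definition cyc_diam_le :: "('a, 'b) monoid_scheme \<Rightarrow> nat \<Rightarrow> bool" where
  "cyc_diam_le G n \<longleftrightarrow> (\<forall>x \<in> cyc_vertices G. \<forall>y \<in> cyc_vertices G. cyc_dist_le G n x y)"

end

theory Submission
  imports Defs
begin

lemma (in group) ord_sub:
  assumes "subgroup H G" "h \<in> H"
  shows "group.ord (G\<lparr>carrier := H\<rparr>) h = ord h"
proof -
  interpret H: group "G\<lparr>carrier := H\<rparr>" using subgroup_imp_group[OF assms(1)] .
  show ?thesis unfolding H.ord_def ord_def by (simp flip: nat_pow_consistent)
qed

lemma (in group) cauchy: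
  assumes "finite (carrier G)" "Factorial_Ring.prime r" "r dvd order G"
  shows "\<exists>g\<in>carrier G. ord g = r"
proof -
  obtain m where m: "order G = r ^ 1 * m" using assms(3) by auto
  obtain H where H: "subgroup H G" "card H = r"
    using sylow_thm[OF assms(2) is_group m assms(1)] by auto
  have "card H \<ge> 2" using H(2) assms(2) prime_ge_2_nat by auto
  have "\<not> H \<subseteq> {\<one>}"
  proof
    assume "H \<subseteq> {\<one>}"
    then have "card H \<le> 1" using card_mono[of "{\<one>}" H] by simp
    then show False using \<open>card H \<ge> 2\<close> by simp
  qed
  then obtain h where h: "h \<in> H" "h \<noteq> \<one>" by auto
  interpret K: group "G\<lparr>carrier := H\<rparr>" using subgroup_imp_group[OF H(1)] .
  have hc: "h \<in> carrier G" using H(1) h(1) subgroup.subset by blast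
  have "K.ord h dvd order (G\<lparr>carrier := H\<rparr>)"
    using K.ord_dvd_group_order[of h] h by simp
  then have "ord h dvd r" using ord_sub[OF H(1) h(1)] H(2) by (simp add: order_def)
  moreover have "ord h \<noteq> 1" using ord_eq_1[OF hc] h(2) by simp
  ultimately have "ord h = r" using assms(2) by (meson prime_nat_iff)
  then show ?thesis using hc by blast
qed

lemma (in group) commute_subgroup:
  assumes "S \<subseteq> carrier G"
  shows "subgroup {z \<in> carrier G. \<forall>g\<in>S. z \<otimes> g = g \<otimes> z} G"
proof (rule subgroupI)
  show "{z \<in> carrier G. \<forall>g\<in>S. z \<otimes> g = g \<otimes> z} \<noteq> {}"
    using assms by (auto intro!: exI[of _ "\<one>"])
next
  fix a assume a: "a \<in> {z \<in> carrier G. \<forall>g\<in>S. z \<otimes> g = g \<otimes> z}"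
  show "inv a \<in> {z \<in> carrier G. \<forall>g\<in>S. z \<otimes> g = g \<otimes> z}"
  proof (safe)
    show "inv a \<in> carrier G" using a by simp
    fix g assume g: "g \<in> S"
    have gc: "g \<in> carrier G" using g assms by auto
    have e: "a \<otimes> g = g \<otimes> a" using a g by auto
    have "inv a \<otimes> g = inv a \<otimes> g \<otimes> (a \<otimes> inv a)" using a gc by simp
    also have "\<dots> = inv a \<otimes> (g \<otimes> a) \<otimes> inv a" using a gc by (simp add: m_assoc)
    also have "\<dots> = inv a \<otimes> (a \<otimes> g) \<otimes> inv a" using e by simp
    also have "\<dots> = g \<otimes> inv a" using a gc by (simp add: m_assoc[symmetric])
    finally show "inv a \<otimes> g = g \<otimes> inv a" .
  qed
next
  fix a b assume a: "a \<in> {z \<in> carrier G. \<forall>g\<in>S. z \<otimes> g = g \<otimes> z}"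
    and b: "b \<in> {z \<in> carrier G. \<forall>g\<in>S. z \<otimes> g = g \<otimes> z}"
  show "a \<otimes> b \<in> {z \<in> carrier G. \<forall>g\<in>S. z \<otimes> g = g \<otimes> z}"
  proof safe
    show "a \<otimes> b \<in> carrier G" using a b by simp
    fix g assume g: "g \<in> S"
    have gc: "g \<in> carrier G" using g assms by auto
    have "a \<otimes> b \<otimes> g = a \<otimes> (g \<otimes> b)" using a b g gc by (simp add: m_assoc)
    also have "\<dots> = (a \<otimes> g) \<otimes> b" using a b gc by (simp add: m_assoc)
    also have "\<dots> = g \<otimes> a \<otimes> b" using a g by simp
    finally show "a \<otimes> b \<otimes> g = g \<otimes> (a \<otimes> b)" using a b gc by (simp add: m_assoc)
  qed
qed auto

lemma (in group) pow_in_gen: "x \<in> carrier G \<Longrightarrow> x [^] (k::nat) \<in> generate G {x}"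
proof (induction k)
  case 0 then show ?case by (simp add: generate.one)
next
  case (Suc k) then show ?case by (metis generate.eng generate.incl insertI1 nat_pow_Suc)
qed

lemma (in group) cyclic_sub:
  assumes "a \<in> carrier G" "b \<in> carrier G" "c \<in> carrier G"
    "c \<in> generate G {a, b}" "a \<in> generate G {c}" "b \<in> generate G {c}"
  shows "cyclic_group (subgroup_generated G {a, b})"
proof -
  have g1: "generate G {a,b} \<subseteq> generate G {c}"
    by (rule generate_subgroup_incl) (use assms generate_is_subgroup in auto)
  have g2: "generate G {c} \<subseteq> generate G {a,b}"
    by (rule generate_subgroup_incl) (use assms generate_is_subgroup in auto)
  have "subgroup_generated G {a, b} = subgroup_generated G {c}"
  proof -
    have "carrier G \<inter> {a, b} = {a, b}" "carrier G \<inter> {c} = {c}" using assms(1-3) by auto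
    then show ?thesis using g1 g2 unfolding subgroup_generated_def by simp
  qed
  then show ?thesis using cyclic_group_generated by simp
qed

lemma (in group) coprime_gen:
  assumes a: "a \<in> carrier G" and b: "b \<in> carrier G" and e: "a \<otimes> b = b \<otimes> a"
    and cp: "coprime (ord a) (ord b)" and fin: "finite (carrier G)"
  shows "a \<in> generate G {a \<otimes> b}"
proof (cases "ord a = 1")
  case True
  then have "a = \<one>" using ord_eq_1 a by simp
  then show ?thesis using generate.one by simp
next
  case False
  have "ord b \<noteq> 0" using ord_ge_1[OF fin b] by simp
  then obtain u t where t: "ord b * u = ord a * t + 1"
    using bezout_nat[of "ord b" "ord a"] cp by (auto simp: coprime_commute coprime_iff_gcd_eq_1 gcd.commute)
  have sg: "subgroup (generate G {a \<otimes> b}) G" using generate_is_subgroup a b by auto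
  have "(a \<otimes> b) [^] (ord b * u) \<in> generate G {a \<otimes> b}"
    using pow_in_gen a b by simp
  moreover have "(a \<otimes> b) [^] (ord b * u) = a"
  proof -
    have "(a \<otimes> b) [^] (ord b * u) = a [^] (ord b * u) \<otimes> b [^] (ord b * u)"
      using pow_mult_distrib[OF e a b] by simp
    also have "b [^] (ord b * u) = \<one>" using b by (simp add: pow_eq_id)
    also have "a [^] (ord b * u) = a"
    proof -
      have "a [^] (ord b * u) = a [^] (ord a * t) \<otimes> a [^] (1::nat)"
        unfolding t using nat_pow_mult[OF a, of "ord a * t" 1] by simp
      also have "a [^] (ord a * t) = (a [^] ord a) [^] t" using nat_pow_pow[OF a] by simp
      also have "\<dots> = \<one>" using a by simp
      finally show ?thesis using a by simp
    qed
    finally show ?thesis using a by simp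
  qed
  ultimately show ?thesis by simp
qed


lemma (in group) cauchy_sub:
  assumes "subgroup H G" "finite H" "Factorial_Ring.prime r" "r dvd card H"
  shows "\<exists>g\<in>H. ord g = r"
proof -
  interpret K: group "G\<lparr>carrier := H\<rparr>" using subgroup_imp_group[OF assms(1)] .
  have "order (G\<lparr>carrier := H\<rparr>) = card H" unfolding order_def by simp
  then obtain g where "g \<in> H" "K.ord g = r"
    using K.cauchy[of r] assms(2-4) by auto
  then show ?thesis using ord_sub[OF assms(1)] by auto
qed

lemma other_prime:
  fixes p n :: nat
  assumes "Factorial_Ring.prime p" "n > 0" "\<not>(\<exists>k. n = p^k)"
  shows "\<exists>r. Factorial_Ring.prime r \<and> r \<noteq> p \<and> r dvd n"
  using assms(2,3)
proof (induction n rule: less_induct)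
  case (less n)
  have "n \<noteq> 1" using less.prems(2) by (metis power_0)
  then obtain r where r: "Factorial_Ring.prime r" "r dvd n" using prime_factor_nat by blast
  show ?case
  proof (cases "r = p")
    case False then show ?thesis using r by blast
  next
    case True
    then obtain n' where n': "n = p * n'" using r by blast
    have p1: "p > 1" using assms(1) prime_gt_1_nat by blast
    have "n' > 0" using n' less.prems(1) by simp
    moreover have "n' < n" using n' p1 \<open>n' > 0\<close> by simp
    moreover have "\<not>(\<exists>k. n' = p^k)"
    proof
      assume "\<exists>k. n' = p^k" then obtain k where "n' = p^k" by blast
      then have "n = p^Suc k" using n' by simp
      then show False using less.prems(2) by blast
    qed
    ultimately obtain r' where "Factorial_Ring.prime r'" "r' \<noteq> p" "r' dvd n'" using less.IH by blast
    then show ?thesis using n' by auto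
  qed
qed

lemma adj_sym: "cyc_adj G x y \<Longrightarrow> cyc_adj G y x"
  unfolding cyc_adj_def by (auto simp: insert_commute)

lemma dist_refl: "x \<in> cyc_vertices G \<Longrightarrow> cyc_dist_le G n x x"
  unfolding cyc_dist_le_def cyc_walk_def by (rule exI[of _ "[x]"]) auto

lemma dist_mono: "cyc_dist_le G m x y \<Longrightarrow> m \<le> n \<Longrightarrow> cyc_dist_le G n x y"
  unfolding cyc_dist_le_def by auto

lemma dist_cons:
  assumes "cyc_adj G x y" "cyc_dist_le G n y w"
  shows "cyc_dist_le G (Suc n) x w"
proof -
  obtain xs where xs: "cyc_walk G xs" "hd xs = y" "last xs = w" "length xs \<le> Suc n"
    using assms(2) unfolding cyc_dist_le_def by blast
  have ne: "xs \<noteq> []" using xs(1) unfolding cyc_walk_def by simp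
  have "cyc_walk G (x # xs)"
    unfolding cyc_walk_def
  proof (intro conjI allI impI)
    show "set (x # xs) \<subseteq> cyc_vertices G" using xs(1) assms(1) unfolding cyc_walk_def cyc_adj_def by auto
    fix i assume i: "Suc i < length (x # xs)"
    show "cyc_adj G ((x # xs) ! i) ((x # xs) ! Suc i)"
    proof (cases i)
      case 0 then show ?thesis using assms(1) xs(2) ne by (simp add: hd_conv_nth)
    next
      case (Suc j) then show ?thesis using xs(1) i unfolding cyc_walk_def by auto
    qed
  qed simp
  then show ?thesis unfolding cyc_dist_le_def
    by (rule_tac x="x # xs" in exI) (use xs ne in auto)
qed

lemma dist_step:
  assumes "(x = y \<and> x \<in> cyc_vertices G) \<or> cyc_adj G x y" "cyc_dist_le G n y w"
  shows "cyc_dist_le G (Suc n) x w"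
  using assms dist_cons dist_mono by (metis le_SucI order_refl)

lemma walk_trans:
  "cyc_walk G xs \<Longrightarrow> hd xs = x \<Longrightarrow> last xs = y \<Longrightarrow> length xs \<le> Suc m
   \<Longrightarrow> cyc_dist_le G n y w \<Longrightarrow> cyc_dist_le G (m + n) x w"
proof (induction xs arbitrary: x m)
  case Nil then show ?case by (simp add: cyc_walk_def)
next
  case (Cons a xs)
  show ?case
  proof (cases "xs = []")
    case True
    then show ?thesis using Cons.prems dist_mono by fastforce
  next
    case False
    have adj: "cyc_adj G a (hd xs)" using Cons.prems(1) False
      unfolding cyc_walk_def by (metis hd_conv_nth length_greater_0_conv not_less_eq
          nth_Cons_0 nth_Cons_Suc length_Cons)
    have W: "\<forall>i. Suc i < length (a # xs) \<longrightarrow> cyc_adj G ((a # xs) ! i) ((a # xs) ! Suc i)"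
      and S: "set (a # xs) \<subseteq> cyc_vertices G"
      using Cons.prems(1) unfolding cyc_walk_def by auto
    have "\<forall>i. Suc i < length xs \<longrightarrow> cyc_adj G (xs ! i) (xs ! Suc i)"
    proof (intro allI impI)
      fix i assume "Suc i < length xs"
      then have "Suc (Suc i) < length (a # xs)" by simp
      from W[rule_format, OF this] show "cyc_adj G (xs ! i) (xs ! Suc i)" by simp
    qed
    then have wk: "cyc_walk G xs" using S False unfolding cyc_walk_def by auto
    obtain m' where m': "m = Suc m'" using Cons.prems(4) False by (cases m) auto
    have "cyc_dist_le G (m' + n) (hd xs) w"
      using Cons.IH[OF wk refl] Cons.prems False m' by auto
    then show ?thesis using dist_cons[OF adj] Cons.prems(2) m' by simp
  qed
qed

lemma dist_trans:
  "cyc_dist_le G m x y \<Longrightarrow> cyc_dist_le G n y w \<Longrightarrow> cyc_dist_le G (m + n) x w"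
proof -
  assume "cyc_dist_le G m x y" "cyc_dist_le G n y w"
  then obtain xs where "cyc_walk G xs" "hd xs = x" "last xs = y" "length xs \<le> Suc m"
    unfolding cyc_dist_le_def[of G m] by blast
  then show ?thesis using walk_trans[of G xs x y m n w] \<open>cyc_dist_le G n y w\<close> by blast
qed

lemma (in group) adj_coprime:
  assumes "finite (carrier G)" "a \<in> cyc_vertices G" "b \<in> cyc_vertices G" "a \<noteq> b"
    "a \<otimes> b = b \<otimes> a" "coprime (ord a) (ord b)"
  shows "cyc_adj G a b"
proof -
  have a: "a \<in> carrier G" and b: "b \<in> carrier G" using assms unfolding cyc_vertices_def by auto
  have "a \<otimes> b \<in> generate G {a, b}" using generate.eng[OF generate.incl[of a "{a,b}" G] generate.incl[of b "{a,b}" G]] by simp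
  moreover have "a \<in> generate G {a \<otimes> b}" using coprime_gen[OF a b assms(5,6,1)] .
  moreover have "b \<in> generate G {a \<otimes> b}" using coprime_gen[OF b a assms(5)[symmetric] _ assms(1)] assms(5,6)
    by (simp add: coprime_commute)
  ultimately show ?thesis unfolding cyc_adj_def using assms cyclic_sub[OF a b] a b by auto
qed

lemma (in group) adj_pow:
  assumes "x \<in> cyc_vertices G" "x [^] (k::nat) \<in> cyc_vertices G" "x \<noteq> x [^] k"
  shows "cyc_adj G x (x [^] k)"
proof -
  have a: "x \<in> carrier G" using assms unfolding cyc_vertices_def by auto
  have sg: "subgroup (generate G {x}) G" using generate_is_subgroup a by auto
  have "x [^] k \<in> generate G {x}"
    using pow_in_gen a by simp
  moreover have "x \<in> generate G {x, x [^] k}" using generate.incl[of x "{x, x [^] k}" G] by simp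
  moreover have "x \<in> generate G {x}" using generate.incl[of x "{x}" G] by simp
  ultimately show ?thesis unfolding cyc_adj_def using assms cyclic_sub[OF a _ a] a by auto
qed


theorem lemma3p2:
  fixes G (structure) and p :: nat
  assumes "group G" and "finite (carrier G)" and "Factorial_Ring.prime p"
    and "group_center G \<noteq> {\<one>}"
    and "is_p_group_set p (group_center G)"
    and "\<And>x. x \<in> carrier G \<Longrightarrow> group.ord G x = p \<Longrightarrow>
           \<not> is_p_group_set p (group_centralizer G x)"
  shows "cyc_connected G \<and> cyc_diam_le G 6"
proof -
  interpret group G by fact
  note fin = assms(2)
  define Z where "Z = group_center G"
  have Zeq: "Z = {z \<in> carrier G. \<forall>g\<in>carrier G. z \<otimes> g = g \<otimes> z}"
    unfolding Z_def group_center_def by simp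
  have sgZ: "subgroup Z G" unfolding Zeq using commute_subgroup by simp
  have finZ: "finite Z" using finite_subset[OF _ fin, of Z] Zeq by blast
  obtain k where k: "card Z = p ^ k" using assms(5) unfolding Z_def is_p_group_set_def by auto
  have "{\<one>} \<subset> Z" using assms(4) subgroup.one_closed[OF sgZ] unfolding Z_def by auto
  then have "card {\<one>} < card Z" using finZ psubset_card_mono by blast
  then have "k \<noteq> 0" using k by (cases k) auto
  then have "p dvd card Z" using k by (simp add: dvd_power)
  then obtain z where z: "z \<in> Z" "ord z = p" using cauchy_sub[OF sgZ finZ assms(3)] by blast
  have zc: "z \<in> carrier G" using z Zeq by auto
  have zcomm: "\<And>g. g \<in> carrier G \<Longrightarrow> g \<otimes> z = z \<otimes> g" using z Zeq by auto
  have p1: "p > 1" using assms(3) prime_gt_1_nat by blast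
  have zV: "z \<in> cyc_vertices G" unfolding cyc_vertices_def using zc z ord_eq_1[OF zc] p1 by auto
  have adjz: "cyc_adj G w z \<and> cyc_adj G z w"
    if w: "w \<in> carrier G" "Factorial_Ring.prime (ord w)" "ord w \<noteq> p" for w
  proof -
    have "ord w \<noteq> 1" using prime_gt_1_nat[OF w(2)] by simp
    then have "w \<noteq> \<one>" using ord_eq_1[OF w(1)] by simp
    then have wV: "w \<in> cyc_vertices G" unfolding cyc_vertices_def using w(1) by simp
    have cp: "coprime (ord w) (ord z)" using primes_coprime[OF w(2) assms(3) w(3)] z(2) by simp
    have ne: "w \<noteq> z"
    proof
      assume "w = z" then show False using w(3) z(2) by simp
    qed
    have c: "w \<otimes> z = z \<otimes> w" using zcomm[OF w(1)] .
    have a1: "cyc_adj G w z" using adj_coprime[OF fin wV zV ne c cp] .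
    show ?thesis using a1 adj_sym[OF a1] by simp
  qed
  have key: "cyc_dist_le G 3 x z \<and> cyc_dist_le G 3 z x" if xV: "x \<in> cyc_vertices G" for x
  proof -
    have xc: "x \<in> carrier G" and x1: "x \<noteq> \<one>" using xV unfolding cyc_vertices_def by auto
    define n where "n = ord x"
    have "n \<ge> 1" using ord_ge_1[OF fin xc] n_def by simp
    moreover have "n \<noteq> 1" using ord_eq_1[OF xc] x1 n_def by simp
    ultimately have "n \<noteq> 1" by simp
    then obtain q where q: "Factorial_Ring.prime q" "q dvd n" using prime_factor_nat by blast
    obtain d where d: "n = q * d" using q(2) by blast
    have q0: "q > 0" using prime_gt_1_nat[OF q(1)] by simp
    have d0: "d \<noteq> 0" using d \<open>n \<ge> 1\<close> by auto
    define y where "y = x [^] d"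
    have ndq: "d dvd ord x" "d \<noteq> 0" using d d0 n_def by auto
    have "ord y = n div d" unfolding y_def using ord_pow[OF xc ndq] n_def by simp
    then have yq: "ord y = q" using d d0 by simp
    have yc: "y \<in> carrier G" unfolding y_def using xc by simp
    have "ord y \<noteq> 1" using yq prime_gt_1_nat[OF q(1)] by simp
    then have "y \<noteq> \<one>" using ord_eq_1[OF yc] by simp
    then have yV: "y \<in> cyc_vertices G" unfolding cyc_vertices_def using yc by simp
    have xy: "(x = y \<and> x \<in> cyc_vertices G) \<or> cyc_adj G x y"
      using adj_pow[OF xV] yV xV unfolding y_def by blast
    have yx: "(y = x \<and> y \<in> cyc_vertices G) \<or> cyc_adj G y x"
      using xy adj_sym[of G x y] by blast
    show ?thesis
    proof (cases "q = p")
      case False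
      have a: "cyc_adj G y z" "cyc_adj G z y" using adjz[OF yc] yq q(1) False by simp_all
      have "cyc_dist_le G 2 x z" using dist_step[OF xy dist_cons[OF a(1) dist_refl[OF zV]]]
        by (simp add: numeral_2_eq_2)
      moreover have "cyc_dist_le G 2 z x" using dist_cons[OF a(2) dist_step[OF yx dist_refl[OF xV]]]
        by (simp add: numeral_2_eq_2)
      ultimately show ?thesis using dist_mono[of G 2 _ _ 3] by simp
    next
      case True
      define C where "C = group_centralizer G y"
      have Ceq: "C = {g \<in> carrier G. \<forall>h\<in>{y}. g \<otimes> h = h \<otimes> g}"
        unfolding C_def group_centralizer_def by simp
      have sgC: "subgroup C G" unfolding Ceq using commute_subgroup[of "{y}"] yc by simp
      have finC: "finite C" using finite_subset[OF _ fin, of C] Ceq by blast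
      have "\<not> is_p_group_set p C" using assms(6)[OF yc] yq True unfolding C_def by simp
      then have np: "\<not> (\<exists>k. card C = p ^ k)" using finC unfolding is_p_group_set_def by simp
      have "C \<noteq> {}" using subgroup.one_closed[OF sgC] by blast
      then have "card C > 0" using finC by (simp add: card_gt_0_iff)
      obtain r where r: "Factorial_Ring.prime r" "r \<noteq> p" "r dvd card C"
        using other_prime[OF assms(3) \<open>card C > 0\<close> np] by blast
      obtain w where w: "w \<in> C" "ord w = r" using cauchy_sub[OF sgC finC r(1) r(3)] by blast
      have wc: "w \<in> carrier G" using w Ceq by auto
      have wy: "w \<otimes> y = y \<otimes> w" using w Ceq by auto
      have "ord w \<noteq> 1" using w(2) prime_gt_1_nat[OF r(1)] by simp
      then have "w \<noteq> \<one>" using ord_eq_1[OF wc] by simp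
      then have wV: "w \<in> cyc_vertices G" unfolding cyc_vertices_def using wc by simp
      have cp: "coprime (ord y) (ord w)" using primes_coprime[OF assms(3) r(1)] r(2) w(2) yq True by simp
      have ne: "y \<noteq> w"
      proof
        assume "y = w" then show False using w(2) yq True r(2) by simp
      qed
      have ayw: "cyc_adj G y w" using adj_coprime[OF fin yV wV ne wy[symmetric] cp] .
      have awy: "cyc_adj G w y" using adj_sym[OF ayw] .
      have a: "cyc_adj G w z" "cyc_adj G z w" using adjz[OF wc] w(2) r(1,2) by simp_all
      have "cyc_dist_le G 3 x z"
        using dist_step[OF xy dist_cons[OF ayw dist_cons[OF a(1) dist_refl[OF zV]]]]
        by (simp add: numeral_3_eq_3)
      moreover have "cyc_dist_le G 3 z x"
        using dist_cons[OF a(2) dist_cons[OF awy dist_step[OF yx dist_refl[OF xV]]]]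
        by (simp add: numeral_3_eq_3)
      ultimately show ?thesis by blast
    qed
  qed
  have diam: "cyc_diam_le G 6"
    unfolding cyc_diam_le_def
  proof (intro ballI)
    fix x y assume "x \<in> cyc_vertices G" "y \<in> cyc_vertices G"
    then have "cyc_dist_le G 3 x z" "cyc_dist_le G 3 z y" using key by auto
    from dist_trans[OF this] show "cyc_dist_le G 6 x y" by simp
  qed
  then have "cyc_connected G" unfolding cyc_connected_def cyc_diam_le_def by blast
  then show ?thesis using diam by simp
qed

end
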